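(* Let $N\ge1$, $T>0$, and consider minimizing $\int_0^T\mathbb V(t)\,dt$ with $\mathbb V=\frac1N\sum_i\xi_i^2$ over $\alpha\in\mathcal U$, where $\dot\xi_i=-\xi_i+(1-\alpha_i)\bar\xi$, $\bar\xi=\frac1N\sum_j\xi_j$, with $\bar\xi(0)>0$ and $\xi_1(0)\ge\dots\ge\xi_N(0)$. Let $\alpha$ be an optimal control whose trajectory satisfies $\xi_i(t)\ge\xi_j(t)$ for all $t\in[0,T]$ and all $i<j$, and let $\lambda$ be a (normal) covector associated with it by the Pontryagin maximum principle, i.e. $\dot\lambda_i=\lambda_i-\frac1N\sum_j(1-\alpha_j)\lambda_j-2\xi_i$ for $i=1,\dots,N$, with $\lambda(T)=0$. Then for all $t\in[0,T]$ and all $i<j$, $\lambda_i(t)\ge\lambda_j(t)$.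
   Context: $\mathcal U$ is the set of measurable $\alpha:[0,T]\to[0,1]^N$ with $\sum_i\alpha_i(t)\le1$ for all $t$. The covector equation comes from the Hamiltonian $H=-\sum_i\lambda_i\xi_i+\bar\xi\sum_i(1-\alpha_i)\lambda_i+\sum_i\xi_i^2$. *)

theory Defs
  imports "HOL-Analysis.Analysis"
begin

text \<open>States, controls and covectors are functions of time with values
  in nat \<Rightarrow> real; only the components with index i < N are relevant
  (the paper's indices 1..N correspond to 0..N-1 here).\<close>

definition admissible :: "nat \<Rightarrow> real \<Rightarrow> (real \<Rightarrow> nat \<Rightarrow> real) \<Rightarrow> bool" where
  "admissible N T \<alpha> \<longleftrightarrow>
     (\<forall>i<N. (\<lambda>t. \<alpha> t i) \<in> borel_measurable (lebesgue_on {0..T})) \<and>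
     (\<forall>t\<in>{0..T}. (\<forall>i<N. 0 \<le> \<alpha> t i \<and> \<alpha> t i \<le> 1) \<and> (\<Sum>i<N. \<alpha> t i) \<le> 1)"

definition mean :: "nat \<Rightarrow> (nat \<Rightarrow> real) \<Rightarrow> real" where
  "mean N x = (\<Sum>j<N. x j) / real N"

definition trajectory :: "nat \<Rightarrow> real \<Rightarrow> (real \<Rightarrow> nat \<Rightarrow> real) \<Rightarrow> (real \<Rightarrow> nat \<Rightarrow> real) \<Rightarrow> bool" where
  "trajectory N T \<alpha> \<xi> \<longleftrightarrow>
     (\<forall>i<N. continuous_on {0..T} (\<lambda>t. \<xi> t i)) \<and>
     (\<forall>i<N. \<forall>t\<in>{0..T}.
        ((\<lambda>s. - \<xi> s i + (1 - \<alpha> s i) * mean N (\<xi> s)) has_integral (\<xi> t i - \<xi> 0 i)) {0..t})"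

definition cost :: "nat \<Rightarrow> real \<Rightarrow> (real \<Rightarrow> nat \<Rightarrow> real) \<Rightarrow> real" where
  "cost N T \<xi> = integral {0..T} (\<lambda>t. (\<Sum>i<N. (\<xi> t i)\<^sup>2) / real N)"

definition optimal :: "nat \<Rightarrow> real \<Rightarrow> (real \<Rightarrow> nat \<Rightarrow> real) \<Rightarrow> (real \<Rightarrow> nat \<Rightarrow> real) \<Rightarrow> bool" where
  "optimal N T \<alpha> \<xi> \<longleftrightarrow> admissible N T \<alpha> \<and> trajectory N T \<alpha> \<xi> \<and>
     (\<forall>\<beta> \<zeta>. admissible N T \<beta> \<and> trajectory N T \<beta> \<zeta> \<and> (\<forall>i<N. \<zeta> 0 i = \<xi> 0 i)
        \<longrightarrow> cost N T \<xi> \<le> cost N T \<zeta>)"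

definition covector :: "nat \<Rightarrow> real \<Rightarrow> (real \<Rightarrow> nat \<Rightarrow> real) \<Rightarrow> (real \<Rightarrow> nat \<Rightarrow> real) \<Rightarrow> (real \<Rightarrow> nat \<Rightarrow> real) \<Rightarrow> bool" where
  "covector N T \<alpha> \<xi> p \<longleftrightarrow>
     (\<forall>i<N. continuous_on {0..T} (\<lambda>t. p t i)) \<and>
     (\<forall>i<N. p T i = 0) \<and>
     (\<forall>i<N. \<forall>t\<in>{0..T}.
        ((\<lambda>s. p s i - (\<Sum>j<N. (1 - \<alpha> s j) * p s j) / real N - 2 * \<xi> s i)
           has_integral (p T i - p t i)) {t..T})"

end

theory Submission
  imports Defs
begin

lemma key:
  fixes D E :: "real \<Rightarrow> real" and T t :: real
  assumes cD: "continuous_on {0..T} D" and cE: "continuous_on {0..T} E"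
    and E0: "\<And>u. u \<in> {0..T} \<Longrightarrow> E u \<ge> 0"
    and HI: "\<And>u. u \<in> {0..T} \<Longrightarrow> ((\<lambda>s. D s - 2 * E s) has_integral (- D u)) {u..T}"
    and t: "t \<in> {0..T}"
  shows "D t \<ge> 0"
proof -
  define F where "F = (\<lambda>s. D s - 2 * E s)"
  have cF: "continuous_on {0..T} F" unfolding F_def
    by (intro continuous_intros cD cE)
  have Deq: "D u = - integral {u..T} F" if "u \<in> {0..T}" for u
    using HI[OF that] unfolding F_def by (simp add: integral_unique)
  define G where "G = (\<lambda>u. exp (-u) * (- integral {u..T} F))"
  have dG: "(G has_real_derivative (- 2 * exp (-u) * E u)) (at u within {0..T})"
    if u: "u \<in> {0..T}" for u
  proof -
    have d1: "((\<lambda>x. integral {x..T} F) has_real_derivative - F u) (at u within {0..T})"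
      by (rule integral_has_real_derivative'[OF cF u])
    have "(G has_real_derivative (- exp (-u) * (- integral {u..T} F) + exp (-u) * (- (- F u))))
          (at u within {0..T})"
      unfolding G_def
      by (auto intro!: derivative_eq_intros d1)
    moreover have "- exp (-u) * (- integral {u..T} F) + exp (-u) * (- (- F u)) = - 2 * exp (-u) * E u"
      using Deq[OF u] unfolding F_def by (simp add: algebra_simps)
    ultimately show ?thesis by simp
  qed
  have cG: "continuous_on {0..T} G"
    by (rule continuous_on_vector_derivative[where f'="\<lambda>u. - 2 * exp (-u) * E u"])
      (use dG in \<open>auto simp: has_real_derivative_iff_has_vector_derivative\<close>)
  have "G T \<le> G t"
  proof (rule DERIV_nonpos_imp_decreasing_open[of t T G])
    show "t \<le> T" using t by auto
    show "continuous_on {t..T} G" using cG t by (auto intro: continuous_on_subset)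
    fix x assume x: "t < x" "x < T"
    then have xi: "x \<in> {0..T}" "0 < x" using t by auto
    have "(G has_real_derivative (- 2 * exp (-x) * E x)) (at x)"
      using dG[OF xi(1)] at_within_Icc_at[of 0 x T] xi x by simp
    moreover have "- 2 * exp (-x) * E x \<le> 0" using E0[OF xi(1)] by simp
    ultimately show "\<exists>y. (G has_real_derivative y) (at x) \<and> y \<le> 0" by blast
  qed
  moreover have "G T = 0" unfolding G_def by simp
  moreover have "G t = exp (-t) * D t" unfolding G_def using Deq[OF t] by simp
  ultimately have "0 \<le> exp (-t) * D t" by simp
  then show ?thesis by (simp add: zero_le_mult_iff)
qed

theorem proposition8:
  fixes N :: nat and T :: real
    and \<alpha> \<xi> p :: "real \<Rightarrow> nat \<Rightarrow> real"
  assumes "N \<ge> 1" and "T > 0"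
    and "mean N (\<xi> 0) > 0"
    and "\<forall>i j. i < j \<and> j < N \<longrightarrow> \<xi> 0 i \<ge> \<xi> 0 j"
    and "optimal N T \<alpha> \<xi>"
    and "\<forall>t\<in>{0..T}. \<forall>i j. i < j \<and> j < N \<longrightarrow> \<xi> t i \<ge> \<xi> t j"
    and "covector N T \<alpha> \<xi> p"
  shows "\<forall>t\<in>{0..T}. \<forall>i j. i < j \<and> j < N \<longrightarrow> p t i \<ge> p t j"
proof (intro ballI allI impI)
  fix t i j assume t: "t \<in> {0..T}" and ij: "i < j \<and> j < N"
  have iN: "i < N" and jN: "j < N" using ij by auto
  have tr: "trajectory N T \<alpha> \<xi>" using assms(5) by (simp add: optimal_def)
  have cv: "covector N T \<alpha> \<xi> p" by fact
  have "0 \<le> p t i - p t j"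
  proof (rule key[where D = "\<lambda>u. p u i - p u j" and E = "\<lambda>u. \<xi> u i - \<xi> u j" and T = T])
    show "continuous_on {0..T} (\<lambda>u. p u i - p u j)"
      using cv iN jN unfolding covector_def by (intro continuous_intros) auto
    show "continuous_on {0..T} (\<lambda>u. \<xi> u i - \<xi> u j)"
      using tr iN jN unfolding trajectory_def by (intro continuous_intros) auto
    show "0 \<le> \<xi> u i - \<xi> u j" if "u \<in> {0..T}" for u
      using assms(6) that ij by auto
    show "t \<in> {0..T}" by fact
    fix u assume u: "u \<in> {0..T}"
    have hi: "((\<lambda>s. p s i - (\<Sum>k<N. (1 - \<alpha> s k) * p s k) / real N - 2 * \<xi> s i)
           has_integral (p T i - p u i)) {u..T}"
      and hj: "((\<lambda>s. p s j - (\<Sum>k<N. (1 - \<alpha> s k) * p s k) / real N - 2 * \<xi> s j)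
           has_integral (p T j - p u j)) {u..T}"
      using cv iN jN u unfolding covector_def by auto
    have T0: "p T i = 0" "p T j = 0" using cv iN jN unfolding covector_def by auto
    have "((\<lambda>s. (p s i - (\<Sum>k<N. (1 - \<alpha> s k) * p s k) / real N - 2 * \<xi> s i)
             - (p s j - (\<Sum>k<N. (1 - \<alpha> s k) * p s k) / real N - 2 * \<xi> s j))
           has_integral ((p T i - p u i) - (p T j - p u j))) {u..T}"
      by (rule has_integral_diff[OF hi hj])
    moreover have "(\<lambda>s. (p s i - (\<Sum>k<N. (1 - \<alpha> s k) * p s k) / real N - 2 * \<xi> s i)
             - (p s j - (\<Sum>k<N. (1 - \<alpha> s k) * p s k) / real N - 2 * \<xi> s j))
        = (\<lambda>s. (p s i - p s j) - 2 * (\<xi> s i - \<xi> s j))"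
      by (rule ext) (simp add: algebra_simps)
    ultimately show "((\<lambda>s. (p s i - p s j) - 2 * (\<xi> s i - \<xi> s j)) has_integral - (p u i - p u j)) {u..T}"
      using T0 by simp
  qed
  then show "p t i \<ge> p t j" by simp
qed

end
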